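(* Let $f=z^4+f_2z^2+f_3z+f_4$ with $f_j\in\mathbb{R}[x,y]$ homogeneous of degree $j$ ($j=2,3,4$), and assume $\gcd(f_3,4f_4-f_2^2)=1$. Let $f=\sum_{i=1}^3p_i^2=\sum_{i=1}^3p_i'^2$ be two representations by quadratic forms in $\mathbb{R}[x,y,z]$, with associated invariants $\xi$ and $\xi'$. If $\xi=\xi'$, then the two representations are orthogonally equivalent.
   Context: The invariant $\xi$ of a representation $f=\sum_{i=1}^3p_i^2$: write $p_i=u_iz^2+v_iz+w_i$ with $u_i\in\mathbb{R}$, $v_i,w_i\in\mathbb{R}[x,y]$ homogeneous of degrees $1,2$; then $u=(u_1,u_2,u_3)^t$ is a unit vector; choose $S\in O_3(\mathbb{R})$ with $Su=(1,0,0)^t$ and let $w'_1$ be the first entry of $S(w_1,w_2,w_3)^t$; then $\xi:=2w'_1$, which does not depend on the choice of $S$. Two representations $\sum p_i^2=\sum p_i'^2$ are orthogonally equivalent if there is $S=(s_{ij})\in O_3(\mathbb{R})$ with $p'_j=\sum_i s_{ij}p_i$ for $j=1,2,3$. *)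

theory Defs
  imports "HOL-Analysis.Analysis" "HOL-Computational_Algebra.Polynomial_Factorial" "HOL-Computational_Algebra.Field_as_Ring"
begin

text \<open>Encoding: R[x,y] is represented as real poly poly (outer variable y, inner x);
  R[x,y,z] as real poly poly poly (outer variable z, coefficients in R[x,y]).\<close>

definition hom2 :: "real poly poly \<Rightarrow> nat \<Rightarrow> bool" where
  "hom2 q d \<longleftrightarrow> (\<forall>k i. coeff (coeff q k) i \<noteq> 0 \<longrightarrow> i + k = d)"

definition hom3 :: "real poly poly poly \<Rightarrow> nat \<Rightarrow> bool" where
  "hom3 q d \<longleftrightarrow> (\<forall>m k i. coeff (coeff (coeff q m) k) i \<noteq> 0 \<longrightarrow> i + k + m = d)"

definition ucoeff :: "real poly poly poly \<Rightarrow> real" where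
  "ucoeff q = coeff (coeff (coeff q 2) 0) 0"

definition wcoeff :: "real poly poly poly \<Rightarrow> real poly poly" where
  "wcoeff q = coeff q 0"

text \<open>The invariant xi of a representation p (index 1 of type 3 plays the role of the first coordinate).\<close>
definition xi :: "(3 \<Rightarrow> real poly poly poly) \<Rightarrow> real poly poly" where
  "xi p = (let u = (\<chi> i. ucoeff (p i));
               S = (SOME S :: real^3^3. orthogonal_matrix S \<and> S *v u = axis 1 1)
           in 2 * (\<Sum>j\<in>UNIV. [:[:S $ 1 $ j:]:] * wcoeff (p j)))"

definition orth_equiv :: "(3 \<Rightarrow> real poly poly poly) \<Rightarrow> (3 \<Rightarrow> real poly poly poly) \<Rightarrow> bool" where
  "orth_equiv p p' \<longleftrightarrow> (\<exists>S :: real^3^3. orthogonal_matrix S \<and>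
      (\<forall>j. p' j = (\<Sum>i\<in>UNIV. [:[:[:S $ i $ j:]:]:] * p i)))"

end

theory Submission
  imports Defs
begin


definition cst :: "real \<Rightarrow> real poly poly" where "cst s = [:[:s:]:]"
definition mk1 :: "real \<Rightarrow> real \<Rightarrow> real poly poly" where "mk1 a b = [:[:0,a:],[:b:]:]"
definition mk2 :: "real \<Rightarrow> real \<Rightarrow> real \<Rightarrow> real poly poly" where
  "mk2 c d e = [:[:0,0,c:],[:0,d:],[:e:]:]"
definition mk3 :: "real \<Rightarrow> real \<Rightarrow> real \<Rightarrow> real \<Rightarrow> real poly poly" where
  "mk3 r0 r1 r2 r3 = [:[:0,0,0,r0:],[:0,0,r1:],[:0,r2:],[:r3:]:]"
definition mk4 :: "real \<Rightarrow> real \<Rightarrow> real \<Rightarrow> real \<Rightarrow> real \<Rightarrow> real poly poly" where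
  "mk4 r0 r1 r2 r3 r4 = [:[:0,0,0,0,r0:],[:0,0,0,r1:],[:0,0,r2:],[:0,r3:],[:r4:]:]"
definition mkp :: "real \<Rightarrow> real \<Rightarrow> real \<Rightarrow> real \<Rightarrow> real \<Rightarrow> real \<Rightarrow> real poly poly poly" where
  "mkp u a b c d e = [: mk2 c d e, mk1 a b, cst u :]"

lemmas mk_defs = cst_def mk1_def mk2_def mk3_def mk4_def

lemma mk11: "mk1 a b * mk1 a' b' = mk2 (a*a') (a*b'+b*a') (b*b')"
  by (simp add: mk_defs algebra_simps)
lemma mk12: "mk1 a b * mk2 c d e = mk3 (a*c) (a*d+b*c) (a*e+b*d) (b*e)"
  by (simp add: mk_defs algebra_simps)
lemma mk22: "mk2 c d e * mk2 c' d' e' = mk4 (c*c') (c*d'+d*c') (c*e'+d*d'+e*c') (d*e'+e*d') (e*e')"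
  by (simp add: mk_defs algebra_simps)
lemma cst_mk: "cst s * mk1 a b = mk1 (s*a) (s*b)" "cst s * mk2 c d e = mk2 (s*c) (s*d) (s*e)"
  "cst s * cst t = cst (s*t)"
  by (simp_all add: mk_defs algebra_simps)
lemma mk_add: "mk1 a b + mk1 a' b' = mk1 (a+a') (b+b')"
  "mk2 c d e + mk2 c' d' e' = mk2 (c+c') (d+d') (e+e')"
  "mk3 r0 r1 r2 r3 + mk3 s0 s1 s2 s3 = mk3 (r0+s0) (r1+s1) (r2+s2) (r3+s3)"
  "mk4 r0 r1 r2 r3 r4 + mk4 s0 s1 s2 s3 s4 = mk4 (r0+s0) (r1+s1) (r2+s2) (r3+s3) (r4+s4)"
  "cst s + cst t = cst (s+t)"
  by (simp_all add: mk_defs algebra_simps)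
lemma mk_eq: "mk1 a b = mk1 a' b' \<longleftrightarrow> a = a' \<and> b = b'"
  "mk2 c d e = mk2 c' d' e' \<longleftrightarrow> c = c' \<and> d = d' \<and> e = e'"
  "mk3 r0 r1 r2 r3 = mk3 s0 s1 s2 s3 \<longleftrightarrow> r0=s0 \<and> r1=s1 \<and> r2=s2 \<and> r3=s3"
  "mk4 r0 r1 r2 r3 r4 = mk4 s0 s1 s2 s3 s4 \<longleftrightarrow> r0=s0 \<and> r1=s1 \<and> r2=s2 \<and> r3=s3 \<and> r4 = s4"
  "cst s = cst t \<longleftrightarrow> s = t"
  by (auto simp: mk_defs)
lemma mk_zero: "mk1 0 0 = 0" "mk2 0 0 0 = 0" "mk3 0 0 0 0 = 0" "mk4 0 0 0 0 0 = 0" "cst 0 = 0" "cst 1 = 1"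
  by (simp_all add: mk_defs one_pCons)
lemma mk_00: "coeff (coeff (mk2 c d e) 0) 0 = 0" "coeff (coeff (mk3 r0 r1 r2 r3) 0) 0 = 0"
   "coeff (coeff (mk4 r0 r1 r2 r3 r4) 0) 0 = 0"
  by (simp_all add: mk_defs)

lemma mkp_coeff: "coeff (coeff (coeff (mkp u a b c d e) m) k) i =
  (if m=2 \<and> k=0 \<and> i=0 then u else if m=1 \<and> k=0 \<and> i=1 then a else if m=1 \<and> k=1 \<and> i=0 then b
   else if m=0 \<and> k=0 \<and> i=2 then c else if m=0 \<and> k=1 \<and> i=1 then d else if m=0 \<and> k=2 \<and> i=0 then e else 0)"
  by (auto simp: mkp_def mk_defs coeff_pCons split: nat.split)

lemma hom3_mkp:
  assumes "hom3 q 2"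
  shows "q = mkp (coeff (coeff (coeff q 2) 0) 0) (coeff (coeff (coeff q 1) 0) 1) (coeff (coeff (coeff q 1) 1) 0)
     (coeff (coeff (coeff q 0) 0) 2) (coeff (coeff (coeff q 0) 1) 1) (coeff (coeff (coeff q 0) 2) 0)"
  (is "q = ?r")
proof -
  have h1: "coeff (coeff (coeff q m) k) i = coeff (coeff (coeff ?r m) k) i" for m k i
  proof (cases "i + k + m = 2")
    case True
    then have "m=2\<and>k=0\<and>i=0 \<or> m=1\<and>k=0\<and>i=1 \<or> m=1\<and>k=1\<and>i=0 \<or> m=0\<and>k=0\<and>i=2 \<or> m=0\<and>k=1\<and>i=1 \<or> m=0\<and>k=2\<and>i=0" by presburger
    then show ?thesis by (elim disjE) (simp_all add: mkp_coeff)
  next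
    case False
    then have "coeff (coeff (coeff q m) k) i = 0" using assms unfolding hom3_def by auto
    moreover have "coeff (coeff (coeff ?r m) k) i = 0" using False unfolding mkp_coeff by auto
    ultimately show ?thesis by simp
  qed
  have h2: "coeff (coeff q m) k = coeff (coeff ?r m) k" for m k by (rule poly_eqI, rule h1)
  have h3: "coeff q m = coeff ?r m" for m by (rule poly_eqI, rule h2)
  show ?thesis by (rule poly_eqI, rule h3)
qed

lemma G00: "coeff (coeff (4 * mk4 r0 r1 r2 r3 r4 - (mk2 c d e)^2) 0) 0 = 0"
  by (simp add: mk_defs power2_eq_square)

lemma unit00: "is_unit (q::real poly poly) \<Longrightarrow> coeff (coeff q 0) 0 \<noteq> 0"
  by (auto simp: is_unit_poly_iff)



lemma sq3: "([:w,q,t:] :: 'a::comm_ring_1 poly)^2 = [:w*w, 2*w*q, q*q+2*t*w, 2*t*q, t*t:]"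
  by (simp add: power2_eq_square algebra_simps mult_pCons_left mult_pCons_right)

lemma mk21: "mk2 c d e * mk1 a b = mk3 (a*c) (a*d+b*c) (a*e+b*d) (b*e)"
  by (simp add: mk12[symmetric] mult.commute)
lemma mk_cst: "mk1 a b * cst s = mk1 (s*a) (s*b)" "mk2 c d e * cst s = mk2 (s*c) (s*d) (s*e)"
  by (simp_all add: mk_defs algebra_simps)
lemma two_mk: "2 * mk1 a b = mk1 (2*a) (2*b)" "2 * mk2 c d e = mk2 (2*c) (2*d) (2*e)"
  "2 * mk3 r0 r1 r2 r3 = mk3 (2*r0) (2*r1) (2*r2) (2*r3)" "2 * cst s = cst (2 * s)"
  by (simp_all only: mult_2 mk_add)

lemma mkp_sq: "(mkp u a b c d e)^2 = [: mk4 (c*c) (2*(c*d)) (d*d+2*(c*e)) (2*(d*e)) (e*e),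
   mk3 (2*(a*c)) (2*(a*d+b*c)) (2*(a*e+b*d)) (2*(b*e)),
   mk2 (a*a+2*(u*c)) (2*(a*b)+2*(u*d)) (b*b+2*(u*e)), mk1 (2*(u*a)) (2*(u*b)), cst (u*u):]"
  unfolding mkp_def sq3 by (simp only: mk11 mk12 mk21 mk22 cst_mk two_mk mk_add) (simp add: mk_eq algebra_simps)

lemma sumsq:
  fixes U A B C D E :: "real^3"
  shows "(\<Sum>i\<in>UNIV. (mkp (U$i) (A$i) (B$i) (C$i) (D$i) (E$i))^2) =
   [: mk4 (C\<bullet>C) (2*(C\<bullet>D)) (D\<bullet>D+2*(C\<bullet>E)) (2*(D\<bullet>E)) (E\<bullet>E),
   mk3 (2*(A\<bullet>C)) (2*(A\<bullet>D+B\<bullet>C)) (2*(A\<bullet>E+B\<bullet>D)) (2*(B\<bullet>E)),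
   mk2 (A\<bullet>A+2*(U\<bullet>C)) (2*(A\<bullet>B)+2*(U\<bullet>D)) (B\<bullet>B+2*(U\<bullet>E)), mk1 (2*(U\<bullet>A)) (2*(U\<bullet>B)), cst (U\<bullet>U):]"
  by (simp add: mkp_sq sum_3 mk_add) (simp add: mk_eq inner_vec_def sum_3 algebra_simps)

lemma cst_mkp: "[:cst s:] * mkp u a b c d e = mkp (s*u) (s*a) (s*b) (s*c) (s*d) (s*e)"
  by (simp add: mkp_def cst_mk mk_cst mult_pCons_left mult.commute)

lemma mkp_add: "mkp u a b c d e + mkp u' a' b' c' d' e' = mkp (u+u') (a+a') (b+b') (c+c') (d+d') (e+e')"
  by (simp add: mkp_def mk_add)

lemma lincomb:
  fixes s U A B C D E :: "real^3"
  shows "(\<Sum>i\<in>UNIV. [:[:[:s$i:]:]:] * mkp (U$i) (A$i) (B$i) (C$i) (D$i) (E$i)) =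
    mkp (s\<bullet>U) (s\<bullet>A) (s\<bullet>B) (s\<bullet>C) (s\<bullet>D) (s\<bullet>E)"
  using cst_mkp[unfolded cst_def]
  by (simp add: sum_3 mkp_add inner_vec_def)

lemma xi_mkp:
  fixes U A B C D E :: "real^3"
  assumes "U \<bullet> U = 1"
  shows "xi (\<lambda>i. mkp (U$i) (A$i) (B$i) (C$i) (D$i) (E$i)) = 2 * mk2 (U\<bullet>C) (U\<bullet>D) (U\<bullet>E)"
proof -
  have u: "(\<chi> i. ucoeff (mkp (U$i) (A$i) (B$i) (C$i) (D$i) (E$i))) = U"
    by (simp add: ucoeff_def mkp_coeff vec_eq_iff)
  have w: "wcoeff (mkp u a b c d e) = mk2 c d e" for u a b c d e
    by (simp add: wcoeff_def mkp_def)
  have "norm U = 1" using assms by (simp add: norm_eq_1)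
  then obtain A0 where A0: "orthogonal_matrix A0" "A0 *v axis 1 1 = U"
    using orthogonal_matrix_exists_basis by blast
  have "transpose A0 *v U = axis 1 1"
    using A0 by (metis matrix_vector_mul_assoc matrix_vector_mul_lid orthogonal_matrix_def)
  then have ex: "\<exists>S::real^3^3. orthogonal_matrix S \<and> S *v U = axis 1 1"
    using A0(1) orthogonal_matrix_transpose by blast
  define S where "S = (SOME S :: real^3^3. orthogonal_matrix S \<and> S *v U = axis 1 1)"
  have S: "orthogonal_matrix S" "S *v U = axis 1 1"
    using someI_ex[OF ex] unfolding S_def by blast+
  have "U = transpose S *v (S *v U)"
    using S by (metis matrix_vector_mul_assoc matrix_vector_mul_lid orthogonal_matrix_def)
  then have "U = transpose S *v axis 1 1" using S by simp
  then have row: "S$1$j = U$j" for j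
    by (simp add: matrix_vector_mult_basis column_def transpose_def)
  have "xi (\<lambda>i. mkp (U$i) (A$i) (B$i) (C$i) (D$i) (E$i)) =
      2 * (\<Sum>j\<in>UNIV. cst (S $ 1 $ j) * mk2 (C$j) (D$j) (E$j))"
    unfolding xi_def Let_def u w S_def[symmetric] cst_def ..
  also have "\<dots> = 2 * mk2 (U\<bullet>C) (U\<bullet>D) (U\<bullet>E)"
    by (simp add: row sum_3 cst_mk mk_add inner_vec_def)
  finally show ?thesis .
qed



definition cp :: "real^3 \<Rightarrow> complex" where "cp x = Complex (x$2) (x$3)"

lemma cp_simps [simp]: "Re (cp x) = x$2" "Im (cp x) = x$3"
  by (simp_all add: cp_def)

lemma inner3: "(x::real^3) \<bullet> y = x$1*y$1 + x$2*y$2 + x$3*y$3"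
  by (simp add: inner_vec_def sum_3)

lemma inner_cp: "(x::real^3) \<bullet> y = x$1*y$1 + Re (cp x * cnj (cp y))"
  by (simp add: inner3)

lemma vec3_eq: "(x::real^3) = y \<longleftrightarrow> x$1 = y$1 \<and> cp x = cp y"
  by (auto simp: vec_eq_iff forall_3 complex_eq_iff)

lemma cp_zero [simp]: "cp 0 = 0" by (simp add: cp_def complex_eq_iff)
lemma cp_axis [simp]: "cp (axis 1 1) = 0" "(axis 1 1 :: real^3) $ 1 = 1"
  by (simp_all add: cp_def complex_eq_iff axis_def)

lemma ax_inner [simp]: "(axis 1 1 :: real^3) \<bullet> x = x$1" "x \<bullet> (axis 1 1 :: real^3) = x$1"
  by (simp_all add: inner_axis inner_axis')

lemma orth_inner:
  fixes S :: "real^'n^'n"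
  assumes "orthogonal_matrix S"
  shows "(S *v x) \<bullet> (S *v y) = x \<bullet> y"
proof -
  have "orthogonal_transformation (\<lambda>x. S *v x)"
    using assms by (simp add: orthogonal_transformation_matrix)
  then show ?thesis by (simp add: orthogonal_transformation_def)
qed

lemma orth_inv:
  fixes S :: "real^'n^'n"
  assumes "orthogonal_matrix S"
  shows "transpose S *v (S *v x) = x" "S *v (transpose S *v x) = x"
  using assms by (metis matrix_vector_mul_assoc matrix_vector_mul_lid orthogonal_matrix_def)+

definition rotm :: "complex \<Rightarrow> real^3^3" where
  "rotm w = vector [vector [1,0,0], vector [0, Re w, - Im w], vector [0, Im w, Re w]]"
definition reflm :: "complex \<Rightarrow> real^3^3" where
  "reflm w = vector [vector [1,0,0], vector [0, Re w, Im w], vector [0, Im w, - Re w]]"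

lemma rotm_apply: "(rotm w *v x)$1 = x$1" "cp (rotm w *v x) = w * cp x"
  by (simp_all add: rotm_def matrix_vector_mult_def sum_3 complex_eq_iff cp_def)

lemma reflm_apply: "(reflm w *v x)$1 = x$1" "cp (reflm w *v x) = w * cnj (cp x)"
  by (simp_all add: reflm_def matrix_vector_mult_def sum_3 complex_eq_iff cp_def)

lemma unit_cmod: "cmod w = 1 \<Longrightarrow> Re w * Re w + Im w * Im w = 1"
  using cmod_power2[of w] by (simp add: power2_eq_square)

lemma rotm_orth: "cmod w = 1 \<Longrightarrow> orthogonal_matrix (rotm w)"
  unfolding orthogonal_matrix
  by (drule unit_cmod) (simp add: vec_eq_iff forall_3 matrix_matrix_mult_def transpose_def mat_def sum_3 rotm_def algebra_simps)

lemma reflm_orth: "cmod w = 1 \<Longrightarrow> orthogonal_matrix (reflm w)"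
  unfolding orthogonal_matrix
  by (drule unit_cmod) (simp add: vec_eq_iff forall_3 matrix_matrix_mult_def transpose_def mat_def sum_3 reflm_def algebra_simps)

lemma cnj_unit: "cmod w = 1 \<Longrightarrow> w * cnj w = 1"
  by (simp add: complex_mult_cnj cmod_power2[symmetric])

lemma L2D:
  fixes \<alpha> \<beta> \<alpha>' \<beta>' :: complex
  assumes n1: "cmod \<alpha> = cmod \<alpha>'" and n2: "cmod \<beta> = cmod \<beta>'" and p: "\<alpha> * cnj \<beta> = \<alpha>' * cnj \<beta>'"
  shows "\<exists>w. cmod w = 1 \<and> \<alpha>' = w * \<alpha> \<and> \<beta>' = w * \<beta>"
proof (cases "\<alpha> = 0")
  case False
  define w where "w = \<alpha>' / \<alpha>"
  have "\<alpha>' \<noteq> 0" using n1 False by (metis norm_eq_zero)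
  then have w1: "cmod w = 1" using n1 False by (simp add: w_def norm_divide)
  have a: "\<alpha>' = w * \<alpha>" using False by (simp add: w_def)
  have "\<alpha> * cnj \<beta> = \<alpha> * (w * cnj \<beta>')" using p a by (simp add: ac_simps)
  then have "cnj \<beta> = w * cnj \<beta>'" using False by simp
  then have "\<beta> = cnj w * \<beta>'" by (metis complex_cnj_cancel_iff complex_cnj_cnj complex_cnj_mult)
  then have "w * \<beta> = (w * cnj w) * \<beta>'" by (simp add: ac_simps)
  then have "\<beta>' = w * \<beta>" using cnj_unit[OF w1] by simp
  then show ?thesis using w1 a by blast
next
  case True
  then have a': "\<alpha>' = 0" using n1 by simp
  show ?thesis
  proof (cases "\<beta> = 0")
    case True
    then have "\<beta>' = 0" using n2 by simp
    then show ?thesis using True \<open>\<alpha> = 0\<close> a' by (intro exI[of _ 1]) simp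
  next
    case False
    define w where "w = \<beta>' / \<beta>"
    have "\<beta>' \<noteq> 0" using n2 False by (metis norm_eq_zero)
    then have w1: "cmod w = 1" using n2 False by (simp add: w_def norm_divide)
    have "\<beta>' = w * \<beta>" using False by (simp add: w_def)
    then show ?thesis using w1 \<open>\<alpha> = 0\<close> a' by (intro exI[of _ w]) simp
  qed
qed

lemma cmod_eq_comp: "x$2*x$2 + x$3*x$3 = y$2*y$2 + y$3*y$3 \<Longrightarrow> cmod (cp x) = cmod (cp y)"
  by (simp add: cmod_def power2_eq_square)

lemma plane:
  fixes a b a' b' :: "real^3"
  assumes a1: "a$1 = 0" "b$1 = 0" "a'$1 = 0" "b'$1 = 0"
    and k: "a \<bullet> a = a' \<bullet> a'" "a \<bullet> b = a' \<bullet> b'" "b \<bullet> b = b' \<bullet> b'"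
  shows "\<exists>R. orthogonal_matrix R \<and> R *v axis 1 1 = axis 1 1 \<and> R *v a = a' \<and> R *v b = b'"
proof -
  have r1: "a$2*a$2 + a$3*a$3 = a'$2*a'$2 + a'$3*a'$3" using k(1) a1 by (simp add: inner3)
  have r2: "a$2*b$2 + a$3*b$3 = a'$2*b'$2 + a'$3*b'$3" using k(2) a1 by (simp add: inner3)
  have r3: "b$2*b$2 + b$3*b$3 = b'$2*b'$2 + b'$3*b'$3" using k(3) a1 by (simp add: inner3)
  have n1: "cmod (cp a) = cmod (cp a')" by (rule cmod_eq_comp[OF r1])
  have n2: "cmod (cp b) = cmod (cp b')" by (rule cmod_eq_comp[OF r3])
  have "(a$3*b$2 - a$2*b$3)^2 = (a'$3*b'$2 - a'$2*b'$3)^2"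
  proof -
    have "(a$3*b$2 - a$2*b$3)^2 = (a$2*a$2 + a$3*a$3)*(b$2*b$2 + b$3*b$3) - (a$2*b$2 + a$3*b$3)^2"
      by (simp add: power2_eq_square algebra_simps)
    also have "\<dots> = (a'$2*a'$2 + a'$3*a'$3)*(b'$2*b'$2 + b'$3*b'$3) - (a'$2*b'$2 + a'$3*b'$3)^2"
      using r1 r2 r3 by simp
    also have "\<dots> = (a'$3*b'$2 - a'$2*b'$3)^2"
      by (simp add: power2_eq_square algebra_simps)
    finally show ?thesis .
  qed
  then have "a$3*b$2 - a$2*b$3 = a'$3*b'$2 - a'$2*b'$3 \<or> a$3*b$2 - a$2*b$3 = -(a'$3*b'$2 - a'$2*b'$3)"
    by (simp add: power2_eq_iff)
  then show ?thesis
  proof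
    assume im: "a$3*b$2 - a$2*b$3 = a'$3*b'$2 - a'$2*b'$3"
    have "cp a * cnj (cp b) = cp a' * cnj (cp b')"
      using r2 im by (simp add: complex_eq_iff)
    from L2D[OF n1 n2 this] obtain w where w: "cmod w = 1" "cp a' = w * cp a" "cp b' = w * cp b" by blast
    show ?thesis
      by (rule exI[of _ "rotm w"]) (simp add: rotm_orth[OF w(1)] vec3_eq rotm_apply w a1)
  next
    assume im: "a$3*b$2 - a$2*b$3 = -(a'$3*b'$2 - a'$2*b'$3)"
    have "cnj (cp a) * cnj (cnj (cp b)) = cp a' * cnj (cp b')"
      using r2 im by (simp add: complex_eq_iff)
    from L2D[OF _ _ this] n1 n2 obtain w where w: "cmod w = 1" "cp a' = w * cnj (cp a)" "cp b' = w * cnj (cp b)"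
      by auto
    show ?thesis
      by (rule exI[of _ "reflm w"]) (simp add: reflm_orth[OF w(1)] vec3_eq reflm_apply w a1)
  qed
qed



definition F3 :: "real^3 \<Rightarrow> real^3 \<Rightarrow> real^3 \<Rightarrow> real^3 \<Rightarrow> real^3 \<Rightarrow> real poly poly" where
  "F3 a b c d e = mk3 (2*(a\<bullet>c)) (2*(a\<bullet>d+b\<bullet>c)) (2*(a\<bullet>e+b\<bullet>d)) (2*(b\<bullet>e))"
definition F2 :: "real^3 \<Rightarrow> real^3 \<Rightarrow> real^3 \<Rightarrow> real^3 \<Rightarrow> real^3 \<Rightarrow> real^3 \<Rightarrow> real poly poly" where
  "F2 u a b c d e = mk2 (a\<bullet>a+2*(u\<bullet>c)) (2*(a\<bullet>b)+2*(u\<bullet>d)) (b\<bullet>b+2*(u\<bullet>e))"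
definition F4 :: "real^3 \<Rightarrow> real^3 \<Rightarrow> real^3 \<Rightarrow> real poly poly" where
  "F4 c d e = mk4 (c\<bullet>c) (2*(c\<bullet>d)) (d\<bullet>d+2*(c\<bullet>e)) (2*(d\<bullet>e)) (e\<bullet>e)"
definition GG :: "real^3 \<Rightarrow> real^3 \<Rightarrow> real^3 \<Rightarrow> real^3 \<Rightarrow> real^3 \<Rightarrow> real^3 \<Rightarrow> real poly poly" where
  "GG u a b c d e = 4 * F4 c d e - (F2 u a b c d e)^2"

lemma four_mk4: "4 * mk4 r0 r1 r2 r3 r4 = mk4 (4*r0) (4*r1) (4*r2) (4*r3) (4*r4)"
proof -
  have "4 * mk4 r0 r1 r2 r3 r4 = 2 * (2 * mk4 r0 r1 r2 r3 r4)" by simp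
  also have "\<dots> = mk4 ((r0+r0)+(r0+r0)) ((r1+r1)+(r1+r1)) ((r2+r2)+(r2+r2)) ((r3+r3)+(r3+r3)) ((r4+r4)+(r4+r4))"
    by (simp only: mult_2 mk_add)
  finally show ?thesis by (simp add: mk_eq)
qed
lemma mk4_diff: "mk4 r0 r1 r2 r3 r4 - mk4 s0 s1 s2 s3 s4 = mk4 (r0-s0) (r1-s1) (r2-s2) (r3-s3) (r4-s4)"
  by (simp add: mk_defs)

lemma elim4:
  fixes p q x0 x1 x2 :: complex
  assumes "p \<noteq> 0 \<or> q \<noteq> 0" "p*x0 = 0" "p*x1 + q*x0 = 0" "p*x2 + q*x1 = 0" "q*x2 = 0"
  shows "x0 = 0 \<and> x1 = 0 \<and> x2 = 0"
proof (cases "p = 0")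
  case True
  then have "q \<noteq> 0" using assms(1) by simp
  then show ?thesis using assms True by auto
next
  case False
  then show ?thesis using assms by auto
qed

lemma GG00: "coeff (coeff (GG u a b c d e) 0) 0 = 0"
  unfolding GG_def F2_def F4_def by (rule G00)

lemma gcd_nonunit:
  assumes "gcd (x::real poly poly) y = 1" "A dvd x" "A dvd y" "coeff (coeff A 0) 0 = 0"
  shows False
proof -
  have "A dvd 1" using assms(1-3) by (metis gcd_greatest)
  then show False using unit00 assms(4) by blast
qed

lemma core_final:
  fixes a b c d e c' d' e' :: "real^3"
  assumes a1: "a$1 = 0" and b1: "b$1 = 0"
    and c1: "c'$1 = c$1" and d1: "d'$1 = d$1" and e1: "e'$1 = e$1"
    and k1: "a\<bullet>c = a\<bullet>c'" and k2: "a\<bullet>d + b\<bullet>c = a\<bullet>d' + b\<bullet>c'"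
    and k3: "a\<bullet>e + b\<bullet>d = a\<bullet>e' + b\<bullet>d'"
    and k4: "b\<bullet>e = b\<bullet>e'" and k5: "c\<bullet>c = c'\<bullet>c'" and k6: "c\<bullet>d = c'\<bullet>d'"
    and k7: "d\<bullet>d + 2*(c\<bullet>e) = d'\<bullet>d' + 2*(c'\<bullet>e')" and k8: "d\<bullet>e = d'\<bullet>e'" and k9: "e\<bullet>e = e'\<bullet>e'"
    and g: "gcd (F3 a b c d e) (GG (axis 1 1) a b c d e) = 1"
  shows "\<exists>T. orthogonal_matrix T \<and> T *v axis 1 1 = axis 1 1 \<and> T *v a = a \<and> T *v b = b \<and>
           T *v c = c' \<and> T *v d = d' \<and> T *v e = e'"
proof -
  have nd: "cp a \<noteq> 0 \<or> cp b \<noteq> 0"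
  proof (rule ccontr)
    assume "\<not> (cp a \<noteq> 0 \<or> cp b \<noteq> 0)"
    then have "a = 0" "b = 0" using a1 b1 by (auto simp: vec3_eq)
    then have "F3 a b c d e = 0" by (simp add: F3_def mk_zero)
    then have "is_unit (GG (axis 1 1) a b c d e)" using g by (simp add: normalize_1_iff)
    then show False using unit00 GG00 by blast
  qed
  have r1: "a$2*c$2 + a$3*c$3 = a$2*c'$2 + a$3*c'$3" using k1 a1 by (simp add: inner3)
  have r2: "a$2*d$2 + a$3*d$3 + (b$2*c$2 + b$3*c$3) = a$2*d'$2 + a$3*d'$3 + (b$2*c'$2 + b$3*c'$3)"
    using k2 a1 b1 by (simp add: inner3)
  have r3: "a$2*e$2 + a$3*e$3 + (b$2*d$2 + b$3*d$3) = a$2*e'$2 + a$3*e'$3 + (b$2*d'$2 + b$3*d'$3)"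
    using k3 a1 b1 by (simp add: inner3)
  have r4: "b$2*e$2 + b$3*e$3 = b$2*e'$2 + b$3*e'$3" using k4 b1 by (simp add: inner3)
  have r5: "c$2*c$2 + c$3*c$3 = c'$2*c'$2 + c'$3*c'$3" using k5 c1 by (simp add: inner3)
  have r6: "c$2*d$2 + c$3*d$3 = c'$2*d'$2 + c'$3*d'$3" using k6 c1 d1 by (simp add: inner3)
  have r7: "d$2*d$2 + d$3*d$3 + 2*(c$2*e$2 + c$3*e$3) = d'$2*d'$2 + d'$3*d'$3 + 2*(c'$2*e'$2 + c'$3*e'$3)"
    using k7 c1 d1 e1 by (simp add: inner3 algebra_simps)
  have r8: "d$2*e$2 + d$3*e$3 = d'$2*e'$2 + d'$3*e'$3" using k8 d1 e1 by (simp add: inner3)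
  have r9: "e$2*e$2 + e$3*e$3 = e'$2*e'$2 + e'$3*e'$3" using k9 e1 by (simp add: inner3)
  define \<alpha> where "\<alpha> = cp a"
  define \<beta> where "\<beta> = cp b"
  define \<gamma> where "\<gamma> = cp c"
  define \<delta> where "\<delta> = cp d"
  define \<epsilon> where "\<epsilon> = cp e"
  define \<gamma>' where "\<gamma>' = cp c'"
  define \<delta>' where "\<delta>' = cp d'"
  define \<epsilon>' where "\<epsilon>' = cp e'"
  note cpdefs = \<alpha>_def \<beta>_def \<gamma>_def \<delta>_def \<epsilon>_def \<gamma>'_def \<delta>'_def \<epsilon>'_def
  define x0 where "x0 = \<alpha>*cnj \<gamma>"
  define x1 where "x1 = \<alpha>*cnj \<delta> + \<beta>*cnj \<gamma>"
  define x2 where "x2 = \<alpha>*cnj \<epsilon> + \<beta>*cnj \<delta>"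
  define x3 where "x3 = \<beta>*cnj \<epsilon>"
  define y0 where "y0 = \<alpha>*cnj \<gamma>'"
  define y1 where "y1 = \<alpha>*cnj \<delta>' + \<beta>*cnj \<gamma>'"
  define y2 where "y2 = \<alpha>*cnj \<epsilon>' + \<beta>*cnj \<delta>'"
  define y3 where "y3 = \<beta>*cnj \<epsilon>'"
  define X where "X = [:x0, x1, x2, x3:]"
  define Xc where "Xc = [:cnj x0, cnj x1, cnj x2, cnj x3:]"
  define Y where "Y = [:y0, y1, y2, y3:]"
  define Yc where "Yc = [:cnj y0, cnj y1, cnj y2, cnj y3:]"
  have re0: "Re x0 = Re y0" using r1 by (simp add: x0_def y0_def cpdefs)
  have re1: "Re x1 = Re y1" using r2 by (simp add: x1_def y1_def cpdefs)
  have re2: "Re x2 = Re y2" using r3 by (simp add: x2_def y2_def cpdefs)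
  have re3: "Re x3 = Re y3" using r4 by (simp add: x3_def y3_def cpdefs)
  have H1: "X + Xc = Y + Yc"
    unfolding X_def Xc_def Y_def Yc_def
    by (simp only: add_pCons add_0 complex_add_cnj re0 re1 re2 re3)
  have XA: "X = [:\<alpha>, \<beta>:] * [:cnj \<gamma>, cnj \<delta>, cnj \<epsilon>:]"
    by (simp add: X_def x0_def x1_def x2_def x3_def algebra_simps)
  have XcA: "Xc = [:cnj \<alpha>, cnj \<beta>:] * [:\<gamma>, \<delta>, \<epsilon>:]"
    by (simp add: Xc_def x0_def x1_def x2_def x3_def algebra_simps)
  have YA: "Y = [:\<alpha>, \<beta>:] * [:cnj \<gamma>', cnj \<delta>', cnj \<epsilon>':]"
    by (simp add: Y_def y0_def y1_def y2_def y3_def algebra_simps)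
  have YcA: "Yc = [:cnj \<alpha>, cnj \<beta>:] * [:\<gamma>', \<delta>', \<epsilon>':]"
    by (simp add: Yc_def y0_def y1_def y2_def y3_def algebra_simps)
  have H2: "[:\<gamma>, \<delta>, \<epsilon>:] * [:cnj \<gamma>, cnj \<delta>, cnj \<epsilon>:] = [:\<gamma>', \<delta>', \<epsilon>':] * [:cnj \<gamma>', cnj \<delta>', cnj \<epsilon>':]"
    using r5 r6 r7 r8 r9 by (simp add: cpdefs complex_eq_iff algebra_simps)
  have H3: "X * Xc = Y * Yc"
  proof -
    have "X * Xc = ([:\<alpha>, \<beta>:] * [:cnj \<alpha>, cnj \<beta>:]) * ([:\<gamma>, \<delta>, \<epsilon>:] * [:cnj \<gamma>, cnj \<delta>, cnj \<epsilon>:])"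
      unfolding XA XcA by (simp only: ac_simps)
    also have "\<dots> = ([:\<alpha>, \<beta>:] * [:cnj \<alpha>, cnj \<beta>:]) * ([:\<gamma>', \<delta>', \<epsilon>':] * [:cnj \<gamma>', cnj \<delta>', cnj \<epsilon>':])"
      by (simp only: H2)
    also have "\<dots> = Y * Yc"
      unfolding YA YcA by (simp only: ac_simps)
    finally show ?thesis .
  qed
  have "(X - Y) * (Xc - Y) = X * Xc - Y * (X + Xc) + Y * Y" by (simp add: algebra_simps)
  also have "\<dots> = X * Xc - Y * (Y + Yc) + Y * Y" by (simp only: H1)
  also have "\<dots> = X * Xc - Y * Yc" by (simp add: algebra_simps)
  also have "\<dots> = 0" by (simp add: H3)
  finally have "X = Y \<or> Xc = Y" by simp
  then show ?thesis
  proof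
    assume "X = Y"
    then have e: "x0 = y0" "x1 = y1" "x2 = y2" "x3 = y3" by (simp_all add: X_def Y_def)
    have "(cnj \<gamma> - cnj \<gamma>') = 0 \<and> (cnj \<delta> - cnj \<delta>') = 0 \<and> (cnj \<epsilon> - cnj \<epsilon>') = 0"
    proof (rule elim4[of \<alpha> \<beta>])
      show "\<alpha> \<noteq> 0 \<or> \<beta> \<noteq> 0" using nd by (simp add: cpdefs)
      show "\<alpha> * (cnj \<gamma> - cnj \<gamma>') = 0" using e(1) by (simp add: x0_def y0_def algebra_simps)
      show "\<alpha> * (cnj \<delta> - cnj \<delta>') + \<beta> * (cnj \<gamma> - cnj \<gamma>') = 0"
        using e(2) by (simp add: x1_def y1_def algebra_simps)
      show "\<alpha> * (cnj \<epsilon> - cnj \<epsilon>') + \<beta> * (cnj \<delta> - cnj \<delta>') = 0"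
        using e(3) by (simp add: x2_def y2_def algebra_simps)
      show "\<beta> * (cnj \<epsilon> - cnj \<epsilon>') = 0" using e(4) by (simp add: x3_def y3_def algebra_simps)
    qed
    then have "cp c = cp c'" "cp d = cp d'" "cp e = cp e'" by (simp_all add: cpdefs)
    then have "c' = c" "d' = d" "e' = e" using c1 d1 e1 by (simp_all add: vec3_eq)
    then show ?thesis
      by (intro exI[of _ "mat 1"]) (simp add: orthogonal_matrix_id)
  next
    assume "Xc = Y"
    then have e: "cnj x0 = y0" "cnj x1 = y1" "cnj x2 = y2" "cnj x3 = y3" by (simp_all add: Xc_def Y_def)
    have e0: "cnj \<alpha> * \<gamma> = \<alpha> * cnj \<gamma>'" using e(1) by (simp add: x0_def y0_def)
    have e1': "cnj \<alpha> * \<delta> + cnj \<beta> * \<gamma> = \<alpha> * cnj \<delta>' + \<beta> * cnj \<gamma>'" using e(2) by (simp add: x1_def y1_def)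
    have e2': "cnj \<alpha> * \<epsilon> + cnj \<beta> * \<delta> = \<alpha> * cnj \<epsilon>' + \<beta> * cnj \<delta>'" using e(3) by (simp add: x2_def y2_def)
    have e3: "cnj \<beta> * \<epsilon> = \<beta> * cnj \<epsilon>'" using e(4) by (simp add: x3_def y3_def)
    show ?thesis
    proof (cases "a$3*b$2 - a$2*b$3 = 0")
      case True
      have imr: "\<beta> * cnj \<alpha> = \<alpha> * cnj \<beta>" using True by (simp add: cpdefs complex_eq_iff algebra_simps)
      obtain \<nu> where \<nu>: "cmod \<nu> = 1" "\<nu> * cnj \<alpha> = \<alpha>" "\<nu> * cnj \<beta> = \<beta>"
      proof (cases "\<alpha> = 0")
        case False
        define \<nu> where "\<nu> = \<alpha> / cnj \<alpha>"
        have "cmod \<nu> = 1" using False by (simp add: \<nu>_def norm_divide)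
        moreover have "\<nu> * cnj \<alpha> = \<alpha>" using False by (simp add: \<nu>_def)
        moreover have "\<nu> * cnj \<beta> = \<beta>"
        proof -
          have "\<nu> * cnj \<beta> = (\<alpha> * cnj \<beta>) / cnj \<alpha>" by (simp add: \<nu>_def)
          also have "\<dots> = (\<beta> * cnj \<alpha>) / cnj \<alpha>" by (simp add: imr)
          also have "\<dots> = \<beta>" using False by simp
          finally show ?thesis .
        qed
        ultimately show ?thesis using that by blast
      next
        case True
        then have "\<beta> \<noteq> 0" using nd by (simp add: cpdefs)
        define \<nu> where "\<nu> = \<beta> / cnj \<beta>"
        have "cmod \<nu> = 1" using \<open>\<beta> \<noteq> 0\<close> by (simp add: \<nu>_def norm_divide)
        moreover have "\<nu> * cnj \<beta> = \<beta>" using \<open>\<beta> \<noteq> 0\<close> by (simp add: \<nu>_def)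
        moreover have "\<nu> * cnj \<alpha> = \<alpha>" using True by simp
        ultimately show ?thesis using that by blast
      qed
      have "(\<gamma> - \<nu> * cnj \<gamma>') = 0 \<and> (\<delta> - \<nu> * cnj \<delta>') = 0 \<and> (\<epsilon> - \<nu> * cnj \<epsilon>') = 0"
      proof (rule elim4[of "cnj \<alpha>" "cnj \<beta>"])
        show "cnj \<alpha> \<noteq> 0 \<or> cnj \<beta> \<noteq> 0" using nd by (simp add: cpdefs)
        have "cnj \<alpha> * (\<gamma> - \<nu> * cnj \<gamma>') = cnj \<alpha> * \<gamma> - (\<nu> * cnj \<alpha>) * cnj \<gamma>'"
          by (simp add: algebra_simps)
        also have "\<dots> = 0" using e0 \<nu>(2) by simp
        finally show "cnj \<alpha> * (\<gamma> - \<nu> * cnj \<gamma>') = 0" .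
        have "cnj \<alpha> * (\<delta> - \<nu> * cnj \<delta>') + cnj \<beta> * (\<gamma> - \<nu> * cnj \<gamma>') =
              (cnj \<alpha> * \<delta> + cnj \<beta> * \<gamma>) - ((\<nu> * cnj \<alpha>) * cnj \<delta>' + (\<nu> * cnj \<beta>) * cnj \<gamma>')"
          by (simp add: algebra_simps)
        also have "\<dots> = 0" using e1' \<nu>(2,3) by simp
        finally show "cnj \<alpha> * (\<delta> - \<nu> * cnj \<delta>') + cnj \<beta> * (\<gamma> - \<nu> * cnj \<gamma>') = 0" .
        have "cnj \<alpha> * (\<epsilon> - \<nu> * cnj \<epsilon>') + cnj \<beta> * (\<delta> - \<nu> * cnj \<delta>') =
              (cnj \<alpha> * \<epsilon> + cnj \<beta> * \<delta>) - ((\<nu> * cnj \<alpha>) * cnj \<epsilon>' + (\<nu> * cnj \<beta>) * cnj \<delta>')"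
          by (simp add: algebra_simps)
        also have "\<dots> = 0" using e2' \<nu>(2,3) by simp
        finally show "cnj \<alpha> * (\<epsilon> - \<nu> * cnj \<epsilon>') + cnj \<beta> * (\<delta> - \<nu> * cnj \<delta>') = 0" .
        have "cnj \<beta> * (\<epsilon> - \<nu> * cnj \<epsilon>') = cnj \<beta> * \<epsilon> - (\<nu> * cnj \<beta>) * cnj \<epsilon>'"
          by (simp add: algebra_simps)
        also have "\<dots> = 0" using e3 \<nu>(3) by simp
        finally show "cnj \<beta> * (\<epsilon> - \<nu> * cnj \<epsilon>') = 0" .
      qed
      then have q: "\<gamma> = \<nu> * cnj \<gamma>'" "\<delta> = \<nu> * cnj \<delta>'" "\<epsilon> = \<nu> * cnj \<epsilon>'" by simp_all
      have nn: "\<nu> * cnj \<nu> = 1" using cnj_unit[OF \<nu>(1)] .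
      have flip: "\<nu> * cnj z = z'" if "z = \<nu> * cnj z'" for z z'
      proof -
        have "\<nu> * cnj z = (\<nu> * cnj \<nu>) * z'" using that by simp
        then show ?thesis using nn by simp
      qed
      have "\<nu> * cnj \<gamma> = \<gamma>'" "\<nu> * cnj \<delta> = \<delta>'" "\<nu> * cnj \<epsilon> = \<epsilon>'"
        using flip q by blast+
      then show ?thesis
        using \<nu> a1 b1 c1 d1 e1
        by (intro exI[of _ "reflm \<nu>"]) (simp add: reflm_orth vec3_eq reflm_apply cpdefs)
    next
      case False
      have a0: "\<alpha> \<noteq> 0" using False by (auto simp: cpdefs complex_eq_iff)
      have b0: "\<beta> \<noteq> 0" using False by (auto simp: cpdefs complex_eq_iff)
      have K: "\<beta> * cnj \<alpha> - \<alpha> * cnj \<beta> \<noteq> 0"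
      proof
        assume "\<beta> * cnj \<alpha> - \<alpha> * cnj \<beta> = 0"
        then have "Im (\<beta> * cnj \<alpha> - \<alpha> * cnj \<beta>) = 0" by simp
        then show False using False by (simp add: cpdefs algebra_simps)
      qed
      have g': "cnj \<gamma>' = cnj \<alpha> * \<gamma> / \<alpha>" using e0 a0 by (simp add: field_simps)
      have ep': "cnj \<epsilon>' = cnj \<beta> * \<epsilon> / \<beta>" using e3 b0 by (simp add: field_simps)
      have "\<beta> * (cnj \<alpha> * \<delta> + cnj \<beta> * \<gamma> - \<beta> * cnj \<gamma>') - \<alpha> * (cnj \<alpha> * \<epsilon> + cnj \<beta> * \<delta> - \<alpha> * cnj \<epsilon>') = 0"
      proof -
        have "cnj \<alpha> * \<delta> + cnj \<beta> * \<gamma> - \<beta> * cnj \<gamma>' = \<alpha> * cnj \<delta>'" using e1' by (simp add: algebra_simps)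
        moreover have "cnj \<alpha> * \<epsilon> + cnj \<beta> * \<delta> - \<alpha> * cnj \<epsilon>' = \<beta> * cnj \<delta>'" using e2' by (simp add: algebra_simps)
        ultimately show ?thesis by simp
      qed
      then have "\<beta> * (cnj \<alpha> * \<delta> + cnj \<beta> * \<gamma> - \<beta> * (cnj \<alpha> * \<gamma> / \<alpha>)) - \<alpha> * (cnj \<alpha> * \<epsilon> + cnj \<beta> * \<delta> - \<alpha> * (cnj \<beta> * \<epsilon> / \<beta>)) = 0"
        by (simp only: g' ep')
      moreover have "\<beta> * (cnj \<alpha> * \<delta> + cnj \<beta> * \<gamma> - \<beta> * (cnj \<alpha> * \<gamma> / \<alpha>)) - \<alpha> * (cnj \<alpha> * \<epsilon> + cnj \<beta> * \<delta> - \<alpha> * (cnj \<beta> * \<epsilon> / \<beta>))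
          = (\<delta> - \<beta> * \<gamma> / \<alpha> - \<alpha> * \<epsilon> / \<beta>) * (\<beta> * cnj \<alpha> - \<alpha> * cnj \<beta>)"
        using a0 b0 by (simp add: field_simps)
      ultimately have "\<delta> - \<beta> * \<gamma> / \<alpha> - \<alpha> * \<epsilon> / \<beta> = 0" using K by simp
      define l0 where "l0 = \<gamma> / \<alpha>"
      define l1 where "l1 = \<epsilon> / \<beta>"
      have gl: "\<gamma> = \<alpha> * l0" using a0 by (simp add: l0_def)
      have el: "\<epsilon> = \<beta> * l1" using b0 by (simp add: l1_def)
      have dl: "\<delta> = \<alpha> * l1 + \<beta> * l0" using \<open>\<delta> - \<beta> * \<gamma> / \<alpha> - \<alpha> * \<epsilon> / \<beta> = 0\<close>
        by (simp add: l0_def l1_def algebra_simps)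
      have sc2: "c$2 = a$2 * Re l0 - a$3 * Im l0" using arg_cong[OF gl, of Re] by (simp add: cpdefs)
      have sc3: "c$3 = a$2 * Im l0 + a$3 * Re l0" using arg_cong[OF gl, of Im] by (simp add: cpdefs)
      have se2: "e$2 = b$2 * Re l1 - b$3 * Im l1" using arg_cong[OF el, of Re] by (simp add: cpdefs)
      have se3: "e$3 = b$2 * Im l1 + b$3 * Re l1" using arg_cong[OF el, of Im] by (simp add: cpdefs)
      have sd2: "d$2 = a$2 * Re l1 - a$3 * Im l1 + (b$2 * Re l0 - b$3 * Im l0)"
        using arg_cong[OF dl, of Re] by (simp add: cpdefs)
      have sd3: "d$3 = a$2 * Im l1 + a$3 * Re l1 + (b$2 * Im l0 + b$3 * Re l0)"
        using arg_cong[OF dl, of Im] by (simp add: cpdefs)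
      define A where "A = mk2 (a\<bullet>a) (2*(a\<bullet>b)) (b\<bullet>b)"
      have dv1: "F3 a b c d e = A * mk1 (2 * Re l0) (2 * Re l1)"
        unfolding F3_def A_def mk21 mk_eq
        by (simp add: inner3 a1 b1 sc2 sc3 sd2 sd3 se2 se3 algebra_simps)
      have dv2: "GG (axis 1 1) a b c d e = A * mk2 (4 * (Re l0 * Re l0 + Im l0 * Im l0) - a\<bullet>a - 4 * c$1)
           (8 * (Re l0 * Re l1 + Im l0 * Im l1) - 2*(a\<bullet>b) - 4 * d$1) (4 * (Re l1 * Re l1 + Im l1 * Im l1) - b\<bullet>b - 4 * e$1)"
        unfolding GG_def F2_def F4_def A_def power2_eq_square mk22 four_mk4 mk4_diff mk_eq ax_inner
        by (simp add: inner3 a1 b1 sc2 sc3 sd2 sd3 se2 se3 algebra_simps)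
      have False
        by (rule gcd_nonunit[OF g, of A]) (simp_all add: dv1 dv2 A_def mk_00)
      then show ?thesis ..
    qed
  qed
qed



lemma core:
  fixes u a b c d e u' a' b' c' d' e' :: "real^3"
  assumes u: "u\<bullet>u = 1" "u\<bullet>a = 0" "u\<bullet>b = 0" and u': "u'\<bullet>u' = 1" "u'\<bullet>a' = 0" "u'\<bullet>b' = 0"
    and k0: "u\<bullet>c = u'\<bullet>c'" "u\<bullet>d = u'\<bullet>d'" "u\<bullet>e = u'\<bullet>e'"
    and kv: "a\<bullet>a = a'\<bullet>a'" "a\<bullet>b = a'\<bullet>b'" "b\<bullet>b = b'\<bullet>b'"
    and k1: "a\<bullet>c = a'\<bullet>c'" and k2: "a\<bullet>d + b\<bullet>c = a'\<bullet>d' + b'\<bullet>c'"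
    and k3: "a\<bullet>e + b\<bullet>d = a'\<bullet>e' + b'\<bullet>d'"
    and k4: "b\<bullet>e = b'\<bullet>e'" and k5: "c\<bullet>c = c'\<bullet>c'" and k6: "c\<bullet>d = c'\<bullet>d'"
    and k7: "d\<bullet>d + 2*(c\<bullet>e) = d'\<bullet>d' + 2*(c'\<bullet>e')" and k8: "d\<bullet>e = d'\<bullet>e'" and k9: "e\<bullet>e = e'\<bullet>e'"
    and g: "gcd (F3 a b c d e) (GG u a b c d e) = 1"
  shows "\<exists>T. orthogonal_matrix T \<and> T *v u = u' \<and> T *v a = a' \<and> T *v b = b' \<and>
           T *v c = c' \<and> T *v d = d' \<and> T *v e = e'"
proof -
  have "norm u = 1" using u by (simp add: norm_eq_1)
  then obtain A1 where A1: "orthogonal_matrix A1" "A1 *v axis 1 1 = u"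
    using orthogonal_matrix_exists_basis by blast
  define S1 where "S1 = transpose A1"
  have S1: "orthogonal_matrix S1" "S1 *v u = axis 1 1"
    using A1 orth_inv(1)[OF A1(1)] by (auto simp: S1_def)
  have "norm u' = 1" using u' by (simp add: norm_eq_1)
  then obtain A2 where A2: "orthogonal_matrix A2" "A2 *v axis 1 1 = u'"
    using orthogonal_matrix_exists_basis by blast
  define S2 where "S2 = transpose A2"
  have S2: "orthogonal_matrix S2" "S2 *v u' = axis 1 1"
    using A2 orth_inv(1)[OF A2(1)] by (auto simp: S2_def)
  have ipS1: "(S1 *v x) \<bullet> (S1 *v y) = x \<bullet> y" for x y using orth_inner[OF S1(1)] .
  have ipS2: "(S2 *v x) \<bullet> (S2 *v y) = x \<bullet> y" for x y using orth_inner[OF S2(1)] .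
  have fst1: "(S1 *v x)$1 = u \<bullet> x" for x by (metis ax_inner(1) S1(2) ipS1)
  have fst2: "(S2 *v x)$1 = u' \<bullet> x" for x by (metis ax_inner(1) S2(2) ipS2)
  obtain R where R: "orthogonal_matrix R" "R *v axis 1 1 = axis 1 1" "R *v (S1 *v a) = S2 *v a'"
      "R *v (S1 *v b) = S2 *v b'"
    using plane[of "S1 *v a" "S1 *v b" "S2 *v a'" "S2 *v b'"] u u' kv
    by (auto simp: fst1 fst2 ipS1 ipS2 inner_commute)
  define M where "M = transpose R ** S2"
  have M: "orthogonal_matrix M" using R(1) S2(1) by (simp add: M_def orthogonal_matrix_mul)
  have Mv: "M *v x = transpose R *v (S2 *v x)" for x by (simp add: M_def matrix_vector_mul_assoc)
  have Mu: "M *v u' = axis 1 1" unfolding Mv S2(2)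
    using orth_inv(1)[OF R(1), of "axis 1 1"] R(2) by simp
  have Ma: "M *v a' = S1 *v a" unfolding Mv R(3)[symmetric] using orth_inv(1)[OF R(1)] by simp
  have Mb: "M *v b' = S1 *v b" unfolding Mv R(4)[symmetric] using orth_inv(1)[OF R(1)] by simp
  have ipM: "(M *v x) \<bullet> (M *v y) = x \<bullet> y" for x y using orth_inner[OF M] .
  have fstM: "(M *v x)$1 = u' \<bullet> x" for x by (metis ax_inner(1) Mu ipM)
  have ipa: "(S1 *v a) \<bullet> (M *v x) = a' \<bullet> x" for x by (metis Ma ipM)
  have ipb: "(S1 *v b) \<bullet> (M *v x) = b' \<bullet> x" for x by (metis Mb ipM)
  have gF3: "F3 (S1 *v a) (S1 *v b) (S1 *v c) (S1 *v d) (S1 *v e) = F3 a b c d e"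
    by (simp add: F3_def ipS1)
  have "GG (axis 1 1) (S1 *v a) (S1 *v b) (S1 *v c) (S1 *v d) (S1 *v e) =
        GG (S1 *v u) (S1 *v a) (S1 *v b) (S1 *v c) (S1 *v d) (S1 *v e)" by (simp only: S1(2))
  also have "\<dots> = GG u a b c d e" by (simp add: GG_def F2_def F4_def ipS1)
  finally have gGG: "GG (axis 1 1) (S1 *v a) (S1 *v b) (S1 *v c) (S1 *v d) (S1 *v e) = GG u a b c d e" .
  obtain T2 where T2: "orthogonal_matrix T2" "T2 *v axis 1 1 = axis 1 1" "T2 *v (S1 *v a) = S1 *v a"
     "T2 *v (S1 *v b) = S1 *v b" "T2 *v (S1 *v c) = M *v c'" "T2 *v (S1 *v d) = M *v d'" "T2 *v (S1 *v e) = M *v e'"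
  proof -
    have "\<exists>T. orthogonal_matrix T \<and> T *v axis 1 1 = axis 1 1 \<and> T *v (S1 *v a) = S1 *v a \<and> T *v (S1 *v b) = S1 *v b \<and>
           T *v (S1 *v c) = M *v c' \<and> T *v (S1 *v d) = M *v d' \<and> T *v (S1 *v e) = M *v e'"
    proof (rule core_final)
      show "(S1 *v a)$1 = 0" "(S1 *v b)$1 = 0" using u by (simp_all add: fst1)
      show "(M *v c')$1 = (S1 *v c)$1" "(M *v d')$1 = (S1 *v d)$1" "(M *v e')$1 = (S1 *v e)$1"
        using k0 by (simp_all add: fst1 fstM)
      show "(S1 *v a) \<bullet> (S1 *v c) = (S1 *v a) \<bullet> (M *v c')" using k1 by (simp add: ipS1 ipa)
      show "(S1 *v a) \<bullet> (S1 *v d) + (S1 *v b) \<bullet> (S1 *v c) = (S1 *v a) \<bullet> (M *v d') + (S1 *v b) \<bullet> (M *v c')"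
        using k2 by (simp add: ipS1 ipa ipb)
      show "(S1 *v a) \<bullet> (S1 *v e) + (S1 *v b) \<bullet> (S1 *v d) = (S1 *v a) \<bullet> (M *v e') + (S1 *v b) \<bullet> (M *v d')"
        using k3 by (simp add: ipS1 ipa ipb)
      show "(S1 *v b) \<bullet> (S1 *v e) = (S1 *v b) \<bullet> (M *v e')" using k4 by (simp add: ipS1 ipb)
      show "(S1 *v c) \<bullet> (S1 *v c) = (M *v c') \<bullet> (M *v c')" using k5 by (simp add: ipS1 ipM)
      show "(S1 *v c) \<bullet> (S1 *v d) = (M *v c') \<bullet> (M *v d')" using k6 by (simp add: ipS1 ipM)
      show "(S1 *v d) \<bullet> (S1 *v d) + 2 * ((S1 *v c) \<bullet> (S1 *v e)) = (M *v d') \<bullet> (M *v d') + 2 * ((M *v c') \<bullet> (M *v e'))"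
        using k7 by (simp add: ipS1 ipM)
      show "(S1 *v d) \<bullet> (S1 *v e) = (M *v d') \<bullet> (M *v e')" using k8 by (simp add: ipS1 ipM)
      show "(S1 *v e) \<bullet> (S1 *v e) = (M *v e') \<bullet> (M *v e')" using k9 by (simp add: ipS1 ipM)
      show "gcd (F3 (S1 *v a) (S1 *v b) (S1 *v c) (S1 *v d) (S1 *v e))
                (GG (axis 1 1) (S1 *v a) (S1 *v b) (S1 *v c) (S1 *v d) (S1 *v e)) = 1"
        using g by (simp only: gF3 gGG)
    qed
    then show ?thesis using that by blast
  qed
  define T where "T = transpose M ** T2 ** S1"
  have Tv: "T *v x = transpose M *v (T2 *v (S1 *v x))" for x
    by (simp add: T_def matrix_vector_mul_assoc matrix_mul_assoc)
  have MM: "transpose M *v (M *v x) = x" for x using orth_inv(1)[OF M] .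
  have "orthogonal_matrix T" using M T2(1) S1(1) by (simp add: T_def orthogonal_matrix_mul)
  moreover have "T *v u = u'"
  proof -
    have "T *v u = transpose M *v (T2 *v axis 1 1)" by (simp add: Tv S1(2))
    also have "\<dots> = transpose M *v (M *v u')" by (simp add: T2(2) Mu)
    finally show ?thesis by (simp only: MM)
  qed
  moreover have "T *v a = a'"
  proof -
    have "T *v a = transpose M *v (S1 *v a)" by (simp add: Tv T2(3))
    also have "\<dots> = transpose M *v (M *v a')" by (simp add: Ma)
    finally show ?thesis by (simp only: MM)
  qed
  moreover have "T *v b = b'"
  proof -
    have "T *v b = transpose M *v (S1 *v b)" by (simp add: Tv T2(4))
    also have "\<dots> = transpose M *v (M *v b')" by (simp add: Mb)
    finally show ?thesis by (simp only: MM)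
  qed
  moreover have "T *v c = c'" by (simp only: Tv T2(5) MM)
  moreover have "T *v d = d'" by (simp only: Tv T2(6) MM)
  moreover have "T *v e = e'" by (simp only: Tv T2(7) MM)
  ultimately show ?thesis by blast
qed

theorem proposition3p8:
  fixes f2 f3 f4 :: "real poly poly"
    and p p' :: "3 \<Rightarrow> real poly poly poly"
  assumes "hom2 f2 2" and "hom2 f3 3" and "hom2 f4 4"
    and "gcd f3 (4 * f4 - f2 ^ 2) = 1"
    and "\<And>i. hom3 (p i) 2" and "\<And>i. hom3 (p' i) 2"
    and "(\<Sum>i\<in>UNIV. (p i) ^ 2) = [:f4, f3, f2, 0, 1:]"
    and "(\<Sum>i\<in>UNIV. (p' i) ^ 2) = [:f4, f3, f2, 0, 1:]"
    and "xi p = xi p'"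
  shows "orth_equiv p p'"
proof -
  define U where "U = (\<chi> i. coeff (coeff (coeff (p i) 2) 0) 0)"
  define A where "A = (\<chi> i. coeff (coeff (coeff (p i) 1) 0) 1)"
  define B where "B = (\<chi> i. coeff (coeff (coeff (p i) 1) 1) 0)"
  define C where "C = (\<chi> i. coeff (coeff (coeff (p i) 0) 0) 2)"
  define D where "D = (\<chi> i. coeff (coeff (coeff (p i) 0) 1) 1)"
  define E where "E = (\<chi> i. coeff (coeff (coeff (p i) 0) 2) 0)"
  define U' where "U' = (\<chi> i. coeff (coeff (coeff (p' i) 2) 0) 0)"
  define A' where "A' = (\<chi> i. coeff (coeff (coeff (p' i) 1) 0) 1)"
  define B' where "B' = (\<chi> i. coeff (coeff (coeff (p' i) 1) 1) 0)"
  define C' where "C' = (\<chi> i. coeff (coeff (coeff (p' i) 0) 0) 2)"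
  define D' where "D' = (\<chi> i. coeff (coeff (coeff (p' i) 0) 1) 1)"
  define E' where "E' = (\<chi> i. coeff (coeff (coeff (p' i) 0) 2) 0)"
  have pe: "p = (\<lambda>i. mkp (U$i) (A$i) (B$i) (C$i) (D$i) (E$i))"
  proof
    fix i show "p i = mkp (U$i) (A$i) (B$i) (C$i) (D$i) (E$i)"
      unfolding U_def A_def B_def C_def D_def E_def vec_lambda_beta by (rule hom3_mkp[OF assms(5)])
  qed
  have pe': "p' = (\<lambda>i. mkp (U'$i) (A'$i) (B'$i) (C'$i) (D'$i) (E'$i))"
  proof
    fix i show "p' i = mkp (U'$i) (A'$i) (B'$i) (C'$i) (D'$i) (E'$i)"
      unfolding U'_def A'_def B'_def C'_def D'_def E'_def vec_lambda_beta by (rule hom3_mkp[OF assms(6)])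
  qed
  note s1 = assms(7)[unfolded pe sumsq]
  note s2 = assms(8)[unfolded pe' sumsq]
  from s1 have f4e: "f4 = mk4 (C\<bullet>C) (2*(C\<bullet>D)) (D\<bullet>D+2*(C\<bullet>E)) (2*(D\<bullet>E)) (E\<bullet>E)"
    and f3e: "f3 = mk3 (2*(A\<bullet>C)) (2*(A\<bullet>D+B\<bullet>C)) (2*(A\<bullet>E+B\<bullet>D)) (2*(B\<bullet>E))"
    and f2e: "f2 = mk2 (A\<bullet>A+2*(U\<bullet>C)) (2*(A\<bullet>B)+2*(U\<bullet>D)) (B\<bullet>B+2*(U\<bullet>E))"
    and z1: "mk1 (2*(U\<bullet>A)) (2*(U\<bullet>B)) = 0" and z0: "cst (U\<bullet>U) = 1"
    by simp_all
  from s2 have f4e': "f4 = mk4 (C'\<bullet>C') (2*(C'\<bullet>D')) (D'\<bullet>D'+2*(C'\<bullet>E')) (2*(D'\<bullet>E')) (E'\<bullet>E')"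
    and f3e': "f3 = mk3 (2*(A'\<bullet>C')) (2*(A'\<bullet>D'+B'\<bullet>C')) (2*(A'\<bullet>E'+B'\<bullet>D')) (2*(B'\<bullet>E'))"
    and f2e': "f2 = mk2 (A'\<bullet>A'+2*(U'\<bullet>C')) (2*(A'\<bullet>B')+2*(U'\<bullet>D')) (B'\<bullet>B'+2*(U'\<bullet>E'))"
    and z1': "mk1 (2*(U'\<bullet>A')) (2*(U'\<bullet>B')) = 0" and z0': "cst (U'\<bullet>U') = 1"
    by simp_all
  have uu: "U\<bullet>U = 1" "U\<bullet>A = 0" "U\<bullet>B = 0"
    using z0 z1 by (simp_all add: mk_zero(1,6)[symmetric] mk_eq del: mk_zero)
  have uu': "U'\<bullet>U' = 1" "U'\<bullet>A' = 0" "U'\<bullet>B' = 0"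
    using z0' z1' by (simp_all add: mk_zero(1,6)[symmetric] mk_eq del: mk_zero)
  have "2 * mk2 (U\<bullet>C) (U\<bullet>D) (U\<bullet>E) = 2 * mk2 (U'\<bullet>C') (U'\<bullet>D') (U'\<bullet>E')"
    using assms(9) unfolding pe pe' xi_mkp[OF uu(1)] xi_mkp[OF uu'(1)] .
  then have k0: "U\<bullet>C = U'\<bullet>C'" "U\<bullet>D = U'\<bullet>D'" "U\<bullet>E = U'\<bullet>E'"
    by (simp_all add: two_mk mk_eq)
  have e2: "A\<bullet>A+2*(U\<bullet>C) = A'\<bullet>A'+2*(U'\<bullet>C')" "2*(A\<bullet>B)+2*(U\<bullet>D) = 2*(A'\<bullet>B')+2*(U'\<bullet>D')"
    "B\<bullet>B+2*(U\<bullet>E) = B'\<bullet>B'+2*(U'\<bullet>E')"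
    using f2e f2e' by (simp_all add: mk_eq)
  have kv: "A\<bullet>A = A'\<bullet>A'" "A\<bullet>B = A'\<bullet>B'" "B\<bullet>B = B'\<bullet>B'" using e2 k0 by simp_all
  have e3: "A\<bullet>C = A'\<bullet>C'" "A\<bullet>D+B\<bullet>C = A'\<bullet>D'+B'\<bullet>C'" "A\<bullet>E+B\<bullet>D = A'\<bullet>E'+B'\<bullet>D'" "B\<bullet>E = B'\<bullet>E'"
    using f3e f3e' by (simp_all add: mk_eq)
  have e4: "C\<bullet>C = C'\<bullet>C'" "C\<bullet>D = C'\<bullet>D'" "D\<bullet>D+2*(C\<bullet>E) = D'\<bullet>D'+2*(C'\<bullet>E')" "D\<bullet>E = D'\<bullet>E'" "E\<bullet>E = E'\<bullet>E'"
    using f4e f4e' by (simp_all add: mk_eq)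
  have g: "gcd (F3 A B C D E) (GG U A B C D E) = 1"
    using assms(4) unfolding F3_def GG_def F2_def F4_def f3e f2e f4e .
  obtain T where T: "orthogonal_matrix T" "T *v U = U'" "T *v A = A'" "T *v B = B'"
    "T *v C = C'" "T *v D = D'" "T *v E = E'"
    using core[OF uu uu' k0 kv e3 e4 g] by blast
  show ?thesis unfolding orth_equiv_def
  proof (intro exI[of _ "transpose T"] conjI allI)
    show "orthogonal_matrix (transpose T)" using T(1) by simp
    fix j
    have comp: "(\<chi> i. transpose T $ i $ j) \<bullet> X = (T *v X) $ j" for X
      by (simp add: inner_vec_def matrix_vector_mult_def transpose_def)
    have "(\<Sum>i\<in>UNIV. [:[:[:transpose T $ i $ j:]:]:] * p i) =
      (\<Sum>i\<in>UNIV. [:[:[:(\<chi> i. transpose T $ i $ j) $ i:]:]:] * mkp (U$i) (A$i) (B$i) (C$i) (D$i) (E$i))"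
      by (simp add: pe)
    also have "\<dots> = mkp ((T *v U) $ j) ((T *v A) $ j) ((T *v B) $ j) ((T *v C) $ j) ((T *v D) $ j) ((T *v E) $ j)"
      unfolding lincomb comp ..
    also have "\<dots> = p' j" unfolding T pe' ..
    finally show "p' j = (\<Sum>i\<in>UNIV. [:[:[:transpose T $ i $ j:]:]:] * p i)" ..
  qed
qed


end
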